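(* Let $m\ge5$ be odd, $h=\frac{m-1}{2}$, and $A=\{1,2,\dots,2^{h-1}-1\}$. For any $i,j\in A$ with $j$ odd, $$C_{i+2^h}\cap C_j=\begin{cases}C_j,&\text{if }(i,j)=(2^s i_1,\ i_1+2^{h-s})\text{ for some odd } i_1\in\{1,\dots,2^{h-1-s}-1\}\text{ and } s\in\{2,3,\dots,h-2\},\\ \emptyset,&\text{otherwise.}\end{cases}$$
   Context: Let $v=2^m-1$. For an integer $i$, $C_i=\{i\cdot 2^s \bmod v: s\ge 0\}$ is the $2$-cyclotomic coset of $i$ modulo $v$. *)

theory Defs
  imports Main
begin

definition cyc_coset :: "nat \<Rightarrow> nat \<Rightarrow> nat set" where
  "cyc_coset m i = {(i * 2 ^ s) mod (2 ^ m - 1) | s. True}"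

end

theory Submission
  imports Defs
begin

lemma pow_mod_v:
  "(a * 2^s) mod (2^m - 1) = (a * 2^(s mod m)) mod ((2::nat)^m - 1)"
proof -
  let ?v = "(2::nat)^m - 1"
  have e1: "(2::nat)^s = 2^(s mod m) * (2^m)^(s div m)"
  proof -
    have "(2::nat)^s = 2^(s mod m + m*(s div m))" by (metis mod_mult_div_eq)
    also have "\<dots> = 2^(s mod m) * (2^m)^(s div m)" by (simp only: power_add power_mult)
    finally show ?thesis .
  qed
  have "(2::nat)^m = ?v + 1" by simp
  hence e2: "(2::nat)^m mod ?v = 1 mod ?v" by (metis mod_add_self1 add.commute)
  have e3: "((2::nat)^m)^(s div m) mod ?v = 1 mod ?v"
    by (metis e2 power_mod power_one)
  have "(a * 2^s) mod ?v = (a * 2^(s mod m) * (2^m)^(s div m)) mod ?v"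
    by (simp add: e1 mult.assoc)
  also have "\<dots> = (a * 2^(s mod m) * (((2::nat)^m)^(s div m) mod ?v)) mod ?v"
    by (metis mod_mult_right_eq)
  also have "\<dots> = (a * 2^(s mod m) * (1 mod ?v)) mod ?v" by (simp only: e3)
  also have "\<dots> = (a * 2^(s mod m)) mod ?v" by (metis mod_mult_right_eq mult_1_right)
  finally show ?thesis .
qed

lemma common:
  assumes "m \<ge> 1" "y \<in> cyc_coset m a" "y \<in> cyc_coset m b"
  shows "\<exists>t. a mod (2^m - 1) = (b * 2^t) mod ((2::nat)^m - 1)"
proof -
  let ?v = "(2::nat)^m - 1"
  obtain s where s: "y = (a * 2^s) mod ?v"
    using assms(2) unfolding cyc_coset_def by blast
  obtain u where u: "y = (b * 2^u) mod ?v"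
    using assms(3) unfolding cyc_coset_def by blast
  define k where "k = m - s mod m"
  have "(s + k) mod m = 0"
  proof -
    have "s mod m < m" using assms(1) by simp
    moreover have "s = m * (s div m) + s mod m" by simp
    ultimately have "s + k = m * (s div m) + m" unfolding k_def by linarith
    thus ?thesis by simp
  qed
  have "a mod ?v = (a * 2^((s+k) mod m)) mod ?v" using \<open>(s + k) mod m = 0\<close> by simp
  also have "\<dots> = (a * 2^(s+k)) mod ?v" by (metis pow_mod_v)
  also have "\<dots> = ((a * 2^s) * 2^k) mod ?v" by (simp add: power_add mult.assoc)
  also have "\<dots> = (((a * 2^s) mod ?v) * 2^k) mod ?v" by (metis mod_mult_left_eq)
  also have "\<dots> = (((b * 2^u) mod ?v) * 2^k) mod ?v" using s u by simp
  also have "\<dots> = (b * 2^(u+k)) mod ?v" by (metis mod_mult_left_eq power_add mult.assoc)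
  finally show ?thesis by blast
qed

lemma sub:
  assumes "a mod (2^m - 1) = (b * 2^t) mod ((2::nat)^m - 1)"
  shows "cyc_coset m a \<subseteq> cyc_coset m b"
proof
  let ?v = "(2::nat)^m - 1"
  fix y assume "y \<in> cyc_coset m a"
  then obtain s where s: "y = (a * 2^s) mod ?v" unfolding cyc_coset_def by auto
  have "y = ((a mod ?v) * 2^s) mod ?v" using s by (metis mod_mult_left_eq)
  also have "\<dots> = (((b * 2^t) mod ?v) * 2^s) mod ?v" using assms by simp
  also have "\<dots> = (b * 2^(t+s)) mod ?v" by (metis mod_mult_left_eq power_add mult.assoc)
  finally show "y \<in> cyc_coset m b" unfolding cyc_coset_def by blast
qed

lemma inter:
  assumes "m \<ge> 1"
  shows "cyc_coset m a \<inter> cyc_coset m b =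
    (if \<exists>t. a mod (2^m - 1) = (b * 2^t) mod ((2::nat)^m - 1) then cyc_coset m b else {})"
proof (cases "\<exists>t. a mod (2^m - 1) = (b * 2^t) mod ((2::nat)^m - 1)")
  case True
  then obtain t where t: "a mod (2^m - 1) = (b * 2^t) mod ((2::nat)^m - 1)" by blast
  have 1: "cyc_coset m a \<subseteq> cyc_coset m b" using sub[OF t] .
  have "a mod (2^m - 1) \<in> cyc_coset m a" unfolding cyc_coset_def
    by (rule CollectI, rule exI[of _ 0], simp)
  with 1 have "a mod (2^m - 1) \<in> cyc_coset m b" by blast
  then obtain t' where "b mod (2^m - 1) = (a * 2^t') mod ((2::nat)^m - 1)"
    using common[OF assms] \<open>a mod (2^m - 1) \<in> cyc_coset m a\<close> by blast
  hence "cyc_coset m b \<subseteq> cyc_coset m a" by (rule sub)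
  with 1 True show ?thesis by auto
next
  case False
  then show ?thesis using common[OF assms, of _ a b] by auto
qed


lemma core:
  fixes m h i j t :: nat
  assumes m: "m = 2*h+1" "h \<ge> 2" and i: "1 \<le> i" "i < 2^(h-1)"
    and j: "1 \<le> j" "j < 2^(h-1)" "odd j"
    and eq: "i + 2^h = (j*2^t) mod (2^m-1)"
  shows "\<exists>s. j*2^s = i + 2^h"
proof -
  let ?v = "(2::nat)^m - 1"
  define t' where "t' = t mod m"
  have tl: "t' < m" using m unfolding t'_def by simp
  have eq': "i + 2^h = (j*2^t') mod ?v" using eq pow_mod_v unfolding t'_def by metis
  have hh: "(2::nat)^h = 2 * 2^(h-1)"
  proof -
    have "h = Suc (h-1)" using m(2) by simp
    then show ?thesis by (metis power_Suc)
  qed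
  show ?thesis
  proof (cases "j*2^t' < ?v")
    case True
    then show ?thesis using eq' by auto
  next
    case False
    define q where "q = (2::nat)^(m-t')"
    define a where "a = j div q"
    define r where "r = j mod q"
    have Pq: "2^t' * q = (2::nat)^m" unfolding q_def using tl by (simp add: power_add[symmetric])
    have jar: "j = a*q + r" unfolding a_def r_def by simp
    have qeven: "even q" unfolding q_def using tl by simp
    have rodd: "odd r" using jar qeven j(3) by auto
    have rq: "r < q" unfolding r_def q_def by simp
    have a0: "a \<noteq> 0"
    proof
      assume "a = 0"
      hence "j < q" using jar rq by simp
      hence "j * 2^t' < q * 2^t'" by simp
      hence "j*2^t' < 2^m" using Pq by (metis mult.commute)
      hence "j*2^t' \<le> ?v" by linarith
      hence jv: "j*2^t' = ?v" using False by simp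
      show False
      proof (cases "t' = 0")
        case True
        hence "j = ?v" using jv by simp
        moreover have "(2::nat)^(h-1) < 2^m - 1"
        proof -
          have "(2::nat)^(h-1) < 2^(h-1) * 2" by simp
          also have "\<dots> = 2^h" using hh by simp
          also have "\<dots> \<le> 2^(m-1)" using m by simp
          also have "\<dots> < 2^m - 1"
          proof -
            have "m = Suc (m-1)" using m by simp
            hence e: "(2::nat)^m = 2*2^(m-1)" by (metis power_Suc)
            have "(2::nat)^1 \<le> 2^(m-1)" using m by (intro power_increasing) auto
            with e show ?thesis by simp
          qed
          finally show ?thesis .
        qed
        ultimately show False using j by simp
      next
        case False
        hence "even (j*2^t')" by simp
        moreover have "odd ?v" using m by simp
        ultimately show False using jv by metis
      qed
    qed
    hence "q \<le> a*q" by simp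
    hence qj: "q \<le> j" using jar by linarith
    have "(2::nat)^(m-t') < 2^(h-1)" using j(2) qj unfolding q_def by linarith
    hence "m - t' < h - 1" by (simp add: power_strict_increasing_iff)
    hence tb: "h + 3 \<le> t'" using m tl by linarith
    have big: "(2::nat)^(h+3) \<le> 2^t'" using tb by (simp add: power_increasing)
    have "h+3 = (h-1)+4" using m(2) by simp
    hence "(2::nat)^(h+3) = 2^((h-1)+4)" by simp
    also have "\<dots> = 16 * 2^(h-1)" by (simp add: power_add)
    finally have "(2::nat)^(h+3) = 16 * 2^(h-1)" .
    hence h1: "16 * 2^(h-1) \<le> (2::nat)^t'" using big by simp
    have hx: "i + 2^h < (2::nat)^t'" using h1 i hh by linarith
    have ar: "a \<le> j" unfolding a_def by simp
    have "(r+1)*2^t' \<le> q*(2::nat)^t'" using rq by (intro mult_le_mono1) simp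
    hence ra: "r * 2^t' + 2^t' \<le> (2::nat)^m" using Pq by (simp add: algebra_simps)
    have jd: "j * 2^t' = a * ?v + (a + r * 2^t')"
    proof -
      have "j * 2^t' = a * 2^m + r * 2^t'" using jar Pq by (simp add: algebra_simps)
      moreover have "a * 2^m = a * ?v + a" by (simp add: algebra_simps)
      ultimately show ?thesis by simp
    qed
    have lt: "a + r * 2^t' < ?v" using ar j(2) h1 ra by linarith
    have md: "(j*2^t') mod ?v = a + r * 2^t'" using jd lt by simp
    have "r \<ge> 1" using rodd by (cases r) auto
    hence "1 * 2^t' \<le> r * (2::nat)^t'" by (intro mult_le_mono1)
    with md have "(2::nat)^t' \<le> (j*2^t') mod ?v" by linarith
    with eq' hx show ?thesis by simp
  qed
qed


lemma cond_iff:
  fixes h i j :: nat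
  assumes h: "h \<ge> 2" and i: "1 \<le> i" "i < 2^(h-1)"
    and j: "1 \<le> j" "j < 2^(h-1)" "odd j"
  shows "(\<exists>s. j*2^s = i + 2^h) \<longleftrightarrow>
    (\<exists>i1 s. odd i1 \<and> i1 \<in> {1..2 ^ (h - 1 - s) - 1} \<and> s \<in> {2..h - 2}
                 \<and> i = 2 ^ s * i1 \<and> j = i1 + 2 ^ (h - s))"
proof
  have hh: "(2::nat)^h = 2 * 2^(h-1)"
  proof -
    have "h = Suc (h-1)" using h by simp
    then show ?thesis by (metis power_Suc)
  qed
  assume "\<exists>s. j*2^s = i + 2^h"
  then obtain s where s: "j*2^s = i + 2^h" by blast
  have s2: "s \<ge> 2"
  proof (rule ccontr)
    assume "\<not> s \<ge> 2"
    hence "(2::nat)^s \<le> 2^1" by (intro power_increasing) auto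
    hence "j*2^s \<le> j*2" by simp
    thus False using s j hh by linarith
  qed
  have sh: "s \<le> h - 2"
  proof (rule ccontr)
    assume "\<not> s \<le> h - 2"
    hence sh1: "h - 1 \<le> s" by linarith
    show False
    proof (cases "j = 1")
      case True
      hence "(2::nat)^h < 2^s" using s i by simp
      hence "h < s" by (simp add: power_strict_increasing_iff)
      hence "(2::nat)^(Suc h) \<le> 2^s" by (intro power_increasing) auto
      thus False using s True i hh by simp
    next
      case False
      hence "3 \<le> j" using j by presburger
      moreover have "(2::nat)^(h-1) \<le> 2^s" using sh1 by (intro power_increasing) auto
      ultimately have "3 * 2^(h-1) \<le> j*(2::nat)^s" by (intro mult_le_mono) auto
      thus False using s i hh by linarith
    qed
  qed
  have pw: "(2::nat)^s * 2^(h-s) = 2^h" using sh by (simp add: power_add[symmetric])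
  have pw2: "(2::nat)^s * 2^(h-1-s) = 2^(h-1)" using sh by (simp add: power_add[symmetric])
  define i1 where "i1 = j - 2^(h-s)"
  have "2^s * 2^(h-s) < j * (2::nat)^s" using pw s i by (simp add: mult.commute)
  hence jg: "2^(h-s) < j" by simp
  have ii: "i = 2^s * i1" unfolding i1_def using s pw jg
    by (simp add: algebra_simps diff_mult_distrib2)
  have ev: "even ((2::nat)^(h-s))" using sh s2 by simp
  have o: "odd i1" unfolding i1_def using j(3) ev jg
    by (metis dvd_diff_nat le_add_diff_inverse less_imp_le_nat dvd_add_right_iff)
  have i11: "1 \<le> i1" using jg unfolding i1_def by simp
  have "2^s * i1 < (2::nat)^s * 2^(h-1-s)" using ii i pw2 by simp
  hence "i1 < 2^(h-1-s)" by simp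
  hence "i1 \<in> {1..2 ^ (h - 1 - s) - 1}" using i11 by simp
  moreover have "j = i1 + 2^(h-s)" unfolding i1_def using jg by simp
  ultimately show "\<exists>i1 s. odd i1 \<and> i1 \<in> {1..2 ^ (h - 1 - s) - 1} \<and> s \<in> {2..h - 2}
                 \<and> i = 2 ^ s * i1 \<and> j = i1 + 2 ^ (h - s)"
    using o ii s2 sh by auto
next
  assume "\<exists>i1 s. odd i1 \<and> i1 \<in> {1..2 ^ (h - 1 - s) - 1} \<and> s \<in> {2..h - 2}
                 \<and> i = 2 ^ s * i1 \<and> j = i1 + 2 ^ (h - s)"
  then obtain i1 s where "s \<le> h - 2" "i = 2 ^ s * i1" "j = i1 + 2 ^ (h - s)" by auto
  moreover have "(2::nat)^s * 2^(h-s) = 2^h" using \<open>s \<le> h - 2\<close> by (simp add: power_add[symmetric])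
  ultimately have "j*2^s = i + 2^h" by (simp add: algebra_simps)
  thus "\<exists>s. j*2^s = i + 2^h" by blast
qed

theorem lemma7:
  fixes m h i j :: nat
  assumes "odd m" and "m \<ge> 5"
    and "h = (m - 1) div 2"
    and "i \<in> {1..2 ^ (h - 1) - 1}" and "j \<in> {1..2 ^ (h - 1) - 1}"
    and "odd j"
  shows "cyc_coset m (i + 2 ^ h) \<inter> cyc_coset m j =
    (if (\<exists>i1 s. odd i1 \<and> i1 \<in> {1..2 ^ (h - 1 - s) - 1} \<and> s \<in> {2..h - 2}
                 \<and> i = 2 ^ s * i1 \<and> j = i1 + 2 ^ (h - s))
     then cyc_coset m j else {})"
proof -
  have m: "m = 2*h+1" "h \<ge> 2" using assms(1,2,3) by (auto elim: oddE)
  have pos: "(0::nat) < 2^(h-1)" by simp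
  have i: "1 \<le> i" "i < 2^(h-1)" using assms(4) pos by auto
  have j: "1 \<le> j" "j < 2^(h-1)" using assms(5) pos by auto
  have hh: "(2::nat)^h = 2 * 2^(h-1)"
  proof -
    have "h = Suc (h-1)" using m by simp
    then show ?thesis by (metis power_Suc)
  qed
  have "(2::nat)^h * 2 \<le> 2^m" using m by (simp add: power_add[symmetric] power_increasing)
  hence xv: "i + 2^h < 2^m - 1" using i hh by linarith
  have "(\<exists>t. (i + 2^h) mod (2^m - 1) = (j * 2^t) mod ((2::nat)^m - 1))
        \<longleftrightarrow> (\<exists>s. j*2^s = i + 2^h)"
  proof
    assume "\<exists>t. (i + 2^h) mod (2^m - 1) = (j * 2^t) mod ((2::nat)^m - 1)"
    then obtain t where "(i + 2^h) mod (2^m - 1) = (j * 2^t) mod ((2::nat)^m - 1)" by blast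
    hence "i + 2^h = (j * 2^t) mod ((2::nat)^m - 1)" using xv by simp
    thus "\<exists>s. j*2^s = i + 2^h" using core[OF m i j assms(6)] by blast
  next
    assume "\<exists>s. j*2^s = i + 2^h"
    thus "\<exists>t. (i + 2^h) mod (2^m - 1) = (j * 2^t) mod ((2::nat)^m - 1)" by metis
  qed
  also have "\<dots> \<longleftrightarrow> (\<exists>i1 s. odd i1 \<and> i1 \<in> {1..2 ^ (h - 1 - s) - 1} \<and> s \<in> {2..h - 2}
                 \<and> i = 2 ^ s * i1 \<and> j = i1 + 2 ^ (h - s))"
    using cond_iff[OF m(2) i j assms(6)] .
  finally show ?thesis using inter[of m "i + 2^h" j] m by simp
qed

end
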